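(* For all $0<\sigma_1<\sigma_2$, $\mathcal{C}(\sigma_1)\subsetneqq\mathcal{C}(\sigma_2)$.
   Context: $H$ is the closure in $L^2([0,L]^2)^2$ of the $\mathbb{R}^2$-valued $[0,L]^2$-periodic trigonometric polynomials $v$ with $\nabla\cdot v=0$ and $\int v\,dx=0$, with norm $|\cdot|$; $A=-\Delta$ is the Stokes operator with spectrally defined powers $A^{\alpha/2}$. Fix $\nu>0$ and $\kappa_0=2\pi/L$. For $\sigma>0$, $\mathcal{C}(\sigma)$ is the set of $u\in C^\infty([0,L]^2)\cap H$ for which there is $c_0=c_0(u)\in\mathbb{R}$ with $\frac{|A^{\alpha/2}u|^2}{\nu^2\kappa_0^{2\alpha}}\le c_0e^{\sigma\alpha^2}$ for all $\alpha\in\mathbb{N}$. *)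

theory Defs
  imports "HOL-Analysis.Analysis"
begin

definition pdiff :: "2 \<Rightarrow> (real^2 \<Rightarrow> 'b::real_normed_vector) \<Rightarrow> real^2 \<Rightarrow> 'b" where
  "pdiff i f x = frechet_derivative f (at x) (axis i 1)"

fun Ck :: "nat \<Rightarrow> (real^2 \<Rightarrow> 'b::real_normed_vector) \<Rightarrow> bool" where
  "Ck 0 f = continuous_on UNIV f"
| "Ck (Suc k) f = ((\<forall>x. f differentiable (at x)) \<and> continuous_on UNIV f \<and> (\<forall>i. Ck k (pdiff i f)))"

definition smooth_field :: "(real^2 \<Rightarrow> 'b::real_normed_vector) \<Rightarrow> bool" where
  "smooth_field f = (\<forall>k. Ck k f)"

definition periodic_field :: "real \<Rightarrow> (real^2 \<Rightarrow> 'b) \<Rightarrow> bool" where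
  "periodic_field L f = (\<forall>x i. f (x + L *\<^sub>R axis i 1) = f x)"

definition kappa0 :: "real \<Rightarrow> real" where
  "kappa0 L = 2 * pi / L"

definition fcoeff :: "real \<Rightarrow> (real^2 \<Rightarrow> real^2) \<Rightarrow> int \<times> int \<Rightarrow> 2 \<Rightarrow> complex" where
  "fcoeff L u k j = complex_of_real (1 / L^2) *
     integral (cbox 0 (vec L))
       (\<lambda>x. complex_of_real (u x $ j) *
            cis (- kappa0 L * (real_of_int (fst k) * x $ 1 + real_of_int (snd k) * x $ 2)))"

text \<open>Membership in H, via the Fourier characterisation of the L^2 closure of
  divergence-free mean-zero periodic trigonometric polynomials:
  square integrable, zero mean mode, and k . u_hat(k) = 0 for all k.\<close>
definition in_H :: "real \<Rightarrow> (real^2 \<Rightarrow> real^2) \<Rightarrow> bool" where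
  "in_H L u =
     ((\<lambda>x. (norm (u x))^2) integrable_on cbox 0 (vec L) \<and>
      (\<forall>j. fcoeff L u (0,0) j = 0) \<and>
      (\<forall>k. of_int (fst k) * fcoeff L u k 1 + of_int (snd k) * fcoeff L u k 2 = 0))"

definition stokes_eig :: "real \<Rightarrow> int \<times> int \<Rightarrow> real" where
  "stokes_eig L k = (kappa0 L)^2 * (real_of_int (fst k)^2 + real_of_int (snd k)^2)"

text \<open>Summand of |A^(alpha/2) u|^2 (Parseval: |f|^2 = L^2 * sum |f_hat k|^2).\<close>
definition Apow_term :: "real \<Rightarrow> nat \<Rightarrow> (real^2 \<Rightarrow> real^2) \<Rightarrow> int \<times> int \<Rightarrow> real" where
  "Apow_term L \<alpha> u k = L^2 * (stokes_eig L k) ^ \<alpha> *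
      ((cmod (fcoeff L u k 1))^2 + (cmod (fcoeff L u k 2))^2)"

definition Apow_norm2 :: "real \<Rightarrow> nat \<Rightarrow> (real^2 \<Rightarrow> real^2) \<Rightarrow> real" where
  "Apow_norm2 L \<alpha> u = (\<Sum>\<^sub>\<infinity>k\<in>UNIV. Apow_term L \<alpha> u k)"

definition gevrey_class :: "real \<Rightarrow> real \<Rightarrow> real \<Rightarrow> (real^2 \<Rightarrow> real^2) set" where
  "gevrey_class L \<nu> \<sigma> =
     {u. smooth_field u \<and> periodic_field L u \<and> in_H L u \<and>
         (\<exists>c0::real. \<forall>\<alpha>::nat. Apow_term L \<alpha> u summable_on UNIV \<and>
             Apow_norm2 L \<alpha> u / (\<nu>^2 * (kappa0 L) ^ (2 * \<alpha>)) \<le> c0 * exp (\<sigma> * (real \<alpha>)^2))}"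

end

theory Submission
  imports Defs
begin


lemma cbox_cart2: "cbox (u::real^2) v = {x. u$1 \<le> x$1 \<and> x$1 \<le> v$1 \<and> u$2 \<le> x$2 \<and> x$2 \<le> v$2}"
  by (auto simp: mem_box_cart forall_2)

lemma vec2_eq: "vector [x$1, x$2] = (x::real^2)"
  by (simp add: vec_eq_iff forall_2)

lemma content_cart2: "Henstock_Kurzweil_Integration.content (cbox (u::real^2) v) = Henstock_Kurzweil_Integration.content (cbox (u$1) (v$1)) * Henstock_Kurzweil_Integration.content (cbox (u$2) (v$2))"
proof (cases "cbox u v = {}")
  case True
  then have "v$1 < u$1 \<or> v$2 < u$2" by (auto simp: cbox_cart2 set_eq_iff)
  then show ?thesis using True by auto
next
  case False
  then have "u$1 \<le> v$1" "u$2 \<le> v$2" by (auto simp: cbox_cart2)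
  then show ?thesis using False by (simp add: content_cbox_cart UNIV_2)
qed

lemma sep2d:
  fixes \<phi> \<psi> :: "real \<Rightarrow> complex"
  assumes "continuous_on UNIV \<phi>" "continuous_on UNIV \<psi>"
  shows "integral (cbox 0 (vec L)) (\<lambda>x::real^2. \<phi> (x$1) * \<psi> (x$2)) = integral {0..L} \<phi> * integral {0..L} \<psi>"
proof -
  define f where "f = (\<lambda>p::real\<times>real. \<phi> (fst p) * \<psi> (snd p))"
  have cf: "continuous_on (cbox (0,0) (L,L)) f"
  proof -
    have "continuous_on UNIV (\<lambda>x::real\<times>real. \<phi> (fst x))"
      by (rule continuous_on_compose2[OF assms(1) continuous_on_fst[OF continuous_on_id]]) auto
    moreover have "continuous_on UNIV (\<lambda>x::real\<times>real. \<psi> (snd x))"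
      by (rule continuous_on_compose2[OF assms(2) continuous_on_snd[OF continuous_on_id]]) auto
    ultimately show ?thesis unfolding f_def
      by (intro continuous_intros) (auto intro: continuous_on_subset)
  qed
  have "integral (cbox (0,0) (L,L)) f = integral (cbox 0 L) (\<lambda>s. integral (cbox 0 L) (\<lambda>t. f (s,t)))"
    by (rule integral_prod_continuous[OF cf])
  also have "\<dots> = integral {0..L} \<phi> * integral {0..L} \<psi>"
    by (simp add: f_def integral_mult_left integral_mult_right)
  finally have I: "integral (cbox (0,0) (L,L)) f = integral {0..L} \<phi> * integral {0..L} \<psi>" .
  have hi: "(f has_integral integral (cbox (0,0) (L,L)) f) (cbox (0,0) (L,L))"
    using integrable_continuous[OF cf] by (simp add: integrable_integral)
  define g where "g = (\<lambda>x::real^2. (x$1, x$2))"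
  define h where "h = (\<lambda>p::real\<times>real. vector [fst p, snd p] :: real^2)"
  have himg: "h ` cbox (a,b) (c,d) = cbox (vector [a,b]) (vector [c,d])" for a b c d
  proof
    show "h ` cbox (a,b) (c,d) \<subseteq> cbox (vector [a,b]) (vector [c,d])"
      by (auto simp: h_def cbox_cart2 cbox_Pair_eq)
    show "cbox (vector [a,b]) (vector [c,d]) \<subseteq> h ` cbox (a,b) (c,d)"
    proof
      fix x assume "x \<in> cbox (vector [a, b]) (vector [c, d] :: real^2)"
      then have "(x$1,x$2) \<in> cbox (a,b) (c,d)" by (auto simp: cbox_cart2 cbox_Pair_eq)
      moreover have "x = h (x$1,x$2)" by (simp add: h_def vec2_eq)
      ultimately show "x \<in> h ` cbox (a,b) (c,d)" by blast
    qed
  qed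
  have gimg: "g ` cbox u v = cbox (u$1,u$2) (v$1,v$2)" for u v
  proof
    show "g ` cbox u v \<subseteq> cbox (u$1,u$2) (v$1,v$2)"
      by (auto simp: g_def cbox_cart2 cbox_Pair_eq)
    show "cbox (u$1,u$2) (v$1,v$2) \<subseteq> g ` cbox u v"
    proof
      fix p assume p: "p \<in> cbox (u$1,u$2) (v$1,v$2)"
      obtain s t where st: "p = (s,t)" by force
      have "vector [s,t] \<in> cbox u v" using p st by (auto simp: cbox_cart2 cbox_Pair_eq)
      moreover have "p = g (vector [s,t])" by (simp add: g_def st)
      ultimately show "p \<in> g ` cbox u v" by blast
    qed
  qed
  have "((\<lambda>x. f (g x)) has_integral (1 / 1) *\<^sub>R integral (cbox (0,0) (L,L)) f) (h ` cbox (0,0) (L,L))"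
  proof (rule has_integral_twiddle[OF _ _ _ _ _ _ _ hi])
    show "\<And>x. h (g x) = x" by (simp add: g_def h_def vec2_eq)
    show "\<And>x. g (h x) = x" by (simp add: g_def h_def)
    show "\<And>x. continuous (at x) g" unfolding g_def by (intro continuous_intros)
    show "\<And>u v. \<exists>w z. g ` cbox u v = cbox w z" using gimg by blast
    show "\<And>u v. \<exists>w z. h ` cbox u v = cbox w z" using himg by (metis surj_pair)
    show "\<And>u v. Henstock_Kurzweil_Integration.content (g ` cbox u v) = 1 * Henstock_Kurzweil_Integration.content (cbox u v)"
      by (simp add: gimg content_Pair content_cart2)
  qed simp
  moreover have "h ` cbox (0,0) (L,L) = cbox 0 (vec L)"
    by (simp add: himg) (simp add: vec_eq_iff forall_2 cbox_cart2)
  moreover have "(\<lambda>x. f (g x)) = (\<lambda>x::real^2. \<phi> (x$1) * \<psi> (x$2))" by (simp add: f_def g_def)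
  ultimately show ?thesis using I by (simp add: integral_unique)
qed



lemma cis_integral:
  fixes \<theta> L :: real
  assumes "L \<ge> 0" "\<theta> \<noteq> 0"
  shows "((\<lambda>t. cis (\<theta> * t)) has_integral ((cis (\<theta> * L) - 1) / (\<i> * of_real \<theta>))) {0..L}"
proof -
  define c where "c = \<i> * complex_of_real \<theta>"
  have c0: "c \<noteq> 0" using assms by (simp add: c_def)
  have e: "cis (\<theta> * t) = exp (c * of_real t)" for t by (simp add: cis_conv_exp c_def mult.assoc)
  have d: "((\<lambda>z. exp (c * z) / c) has_field_derivative exp (c * z)) (at z)" for z
    using c0 by (auto intro!: derivative_eq_intros)
  have "((\<lambda>t. exp (c * of_real t) / c) has_vector_derivative exp (c * of_real t)) (at t within {0..L})" for t
    by (rule has_vector_derivative_at_within, rule has_vector_derivative_real_field[OF d])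
  then have "((\<lambda>t. exp (c * of_real t)) has_integral (exp (c * of_real L) / c - exp (c * of_real 0) / c)) {0..L}"
    using assms by (intro fundamental_theorem_of_calculus) auto
  then have "((\<lambda>t. cis (\<theta> * t)) has_integral ((cis (\<theta> * L) - 1) / c)) {0..L}"
    by (simp add: e diff_divide_distrib)
  then show ?thesis by (simp add: c_def)
qed

lemma cis_int_integral:
  fixes L :: real and m :: int
  assumes "L > 0"
  shows "((\<lambda>t. cis (kappa0 L * of_int m * t)) has_integral (if m = 0 then complex_of_real L else 0)) {0..L}"
proof (cases "m = 0")
  case True
  then show ?thesis using has_integral_const_real[of "1::complex" 0 L] assms by (simp add: scaleR_conv_of_real)
next
  case False
  have eq: "kappa0 L * of_int m * L = 2 * pi * of_int m" using assms by (simp add: kappa0_def)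
  have "cis (kappa0 L * of_int m * L) = 1" by (subst eq) simp
  moreover have "kappa0 L * of_int m \<noteq> 0" using assms False by (simp add: kappa0_def)
  ultimately show ?thesis using cis_integral[of L "kappa0 L * of_int m"] assms False by simp
qed



definition trig :: "(nat \<Rightarrow> real) \<Rightarrow> (nat \<Rightarrow> real) \<Rightarrow> (nat \<Rightarrow> real) \<Rightarrow> real \<Rightarrow> real" where
  "trig N p q y = (\<Sum>j. p j * cos (N j * y) + q j * sin (N j * y))"

definition rapid :: "(nat \<Rightarrow> real) \<Rightarrow> (nat \<Rightarrow> real) \<Rightarrow> bool" where
  "rapid N p = (\<forall>m::nat. summable (\<lambda>j. \<bar>p j\<bar> * \<bar>N j\<bar> ^ m))"

lemma rapid_shift:
  assumes "rapid N p" shows "rapid N (\<lambda>j. c * N j * p j)"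
  unfolding rapid_def
proof
  fix m
  have "summable (\<lambda>j. \<bar>c\<bar> * (\<bar>p j\<bar> * \<bar>N j\<bar> ^ Suc m))"
    using assms unfolding rapid_def by (intro summable_mult) blast
  then show "summable (\<lambda>j. \<bar>c * N j * p j\<bar> * \<bar>N j\<bar> ^ m)"
    by (simp add: abs_mult algebra_simps)
qed

lemma trig_deriv:
  assumes p: "rapid N p" and q: "rapid N q"
  shows "(trig N p q has_real_derivative trig N (\<lambda>j. N j * q j) (\<lambda>j. - N j * p j) y) (at y)"
proof -
  define f where "f = (\<lambda>n y. p n * cos (N n * y) + q n * sin (N n * y))"
  define f' where "f' = (\<lambda>n y. p n * (- sin (N n * y) * N n) + q n * (cos (N n * y) * N n))"
  have d: "(f n has_field_derivative f' n x) (at x within UNIV)" for n x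
    unfolding f_def f'_def by (auto intro!: derivative_eq_intros)
  have M: "summable (\<lambda>n. \<bar>p n\<bar> * \<bar>N n\<bar> ^ 1 + \<bar>q n\<bar> * \<bar>N n\<bar> ^ 1)"
    using p q unfolding rapid_def by (intro summable_add) blast+
  have bnd: "norm (f' n x) \<le> \<bar>p n\<bar> * \<bar>N n\<bar> ^ 1 + \<bar>q n\<bar> * \<bar>N n\<bar> ^ 1" for n x
  proof -
    have "\<bar>f' n x\<bar> \<le> \<bar>p n\<bar> * (\<bar>sin (N n * x)\<bar> * \<bar>N n\<bar>) + \<bar>q n\<bar> * (\<bar>cos (N n * x)\<bar> * \<bar>N n\<bar>)"
      unfolding f'_def by (rule order.trans[OF abs_triangle_ineq]) (simp add: abs_mult)
    also have "\<dots> \<le> \<bar>p n\<bar> * (1 * \<bar>N n\<bar>) + \<bar>q n\<bar> * (1 * \<bar>N n\<bar>)"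
      by (intro add_mono mult_left_mono mult_right_mono) auto
    finally show ?thesis by simp
  qed
  have uc: "uniformly_convergent_on UNIV (\<lambda>n x. \<Sum>i<n. f' i x)"
    by (rule Weierstrass_m_test'[OF _ M]) (use bnd in auto)
  have s0: "summable (\<lambda>n. f n 0)"
  proof -
    have "summable (\<lambda>j. \<bar>p j\<bar> * \<bar>N j\<bar> ^ 0)" using p unfolding rapid_def by blast
    then have "summable (\<lambda>j. \<bar>p j\<bar>)" by simp
    then show ?thesis unfolding f_def by (simp add: summable_rabs_cancel)
  qed
  have "((\<lambda>x. \<Sum>n. f n x) has_field_derivative (\<Sum>n. f' n y)) (at y)"
    by (rule has_field_derivative_series'(2)[OF convex_UNIV d uc _ s0]) auto
  moreover have "(\<lambda>x. \<Sum>n. f n x) = trig N p q" by (simp add: fun_eq_iff f_def trig_def)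
  moreover have "(\<Sum>n. f' n y) = trig N (\<lambda>j. N j * q j) (\<lambda>j. - N j * p j) y"
    by (simp add: trig_def f'_def algebra_simps)
  ultimately show ?thesis by simp
qed


lemma trig_summable:
  assumes p: "rapid N p" and q: "rapid N q"
  shows "summable (\<lambda>j. p j * cos (N j * y) + q j * sin (N j * y))"
proof (rule summable_comparison_test)
  have "summable (\<lambda>j. \<bar>p j\<bar> * \<bar>N j\<bar> ^ 0 + \<bar>q j\<bar> * \<bar>N j\<bar> ^ 0)"
    using p q unfolding rapid_def by (intro summable_add) blast+
  then show "summable (\<lambda>j. \<bar>p j\<bar> + \<bar>q j\<bar>)" by simp
  show "\<exists>N0. \<forall>n\<ge>N0. norm (p n * cos (N n * y) + q n * sin (N n * y)) \<le> \<bar>p n\<bar> + \<bar>q n\<bar>"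
  proof (intro exI allI impI)
    fix n
    have "\<bar>p n * cos (N n * y) + q n * sin (N n * y)\<bar> \<le> \<bar>p n\<bar> * \<bar>cos (N n * y)\<bar> + \<bar>q n\<bar> * \<bar>sin (N n * y)\<bar>"
      by (rule order.trans[OF abs_triangle_ineq]) (simp add: abs_mult)
    also have "\<dots> \<le> \<bar>p n\<bar> * 1 + \<bar>q n\<bar> * 1"
      by (intro add_mono mult_left_mono) auto
    finally show "norm (p n * cos (N n * y) + q n * sin (N n * y)) \<le> \<bar>p n\<bar> + \<bar>q n\<bar>" by simp
  qed
qed

lemma trig_scale:
  assumes p: "rapid N p" and q: "rapid N q"
  shows "c * trig N p q y = trig N (\<lambda>j. c * p j) (\<lambda>j. c * q j) y"
proof -
  have "c * trig N p q y = (\<Sum>j. c * (p j * cos (N j * y) + q j * sin (N j * y)))"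
    unfolding trig_def by (rule suminf_mult[OF trig_summable[OF p q], symmetric])
  also have "\<dots> = trig N (\<lambda>j. c * p j) (\<lambda>j. c * q j) y"
    unfolding trig_def by (rule suminf_cong) (simp add: distrib_left mult.assoc)
  finally show ?thesis .
qed

definition ufield :: "(nat \<Rightarrow> real) \<Rightarrow> (nat \<Rightarrow> real) \<Rightarrow> (nat \<Rightarrow> real) \<Rightarrow> real^2 \<Rightarrow> real^2" where
  "ufield N p q = (\<lambda>x. trig N p q (x$2) *\<^sub>R axis 1 1)"

lemma ufield_deriv:
  assumes p: "rapid N p" and q: "rapid N q"
  shows "(ufield N p q has_derivative (\<lambda>h. (trig N (\<lambda>j. N j * q j) (\<lambda>j. - N j * p j) (x$2) * h$2) *\<^sub>R axis 1 1)) (at x)"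
proof -
  have g: "(trig N p q has_derivative (\<lambda>h. trig N (\<lambda>j. N j * q j) (\<lambda>j. - N j * p j) (x$2) * h)) (at (x$2))"
    using trig_deriv[OF p q, of "x$2"] by (simp add: has_field_derivative_def)
  have l: "((\<lambda>x::real^2. x$2) has_derivative (\<lambda>h. h$2)) (at x)"
    by (rule bounded_linear_imp_has_derivative) auto
  have "((\<lambda>x. trig N p q (x$2)) has_derivative (\<lambda>h. trig N (\<lambda>j. N j * q j) (\<lambda>j. - N j * p j) (x$2) * h$2)) (at x)"
    by (rule has_derivative_compose[OF l g])
  then show ?thesis unfolding ufield_def by (rule has_derivative_scaleR_left)
qed

lemma ufield_pdiff:
  assumes p: "rapid N p" and q: "rapid N q"
  shows "pdiff i (ufield N p q) = ufield N (\<lambda>j. (axis i 1 $ 2) * N j * q j) (\<lambda>j. (- (axis i 1 $ 2)) * N j * p j)"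
proof
  fix x
  have "pdiff i (ufield N p q) x = (trig N (\<lambda>j. N j * q j) (\<lambda>j. - N j * p j) (x$2) * (axis i 1 $ 2)) *\<^sub>R axis 1 1"
  proof -
    have "frechet_derivative (ufield N p q) (at x) = (\<lambda>h. (trig N (\<lambda>j. N j * q j) (\<lambda>j. - N j * p j) (x$2) * h$2) *\<^sub>R axis 1 1)"
      by (rule frechet_derivative_at[OF ufield_deriv[OF p q, of x], symmetric])
    then show ?thesis unfolding pdiff_def by simp
  qed
  also have "trig N (\<lambda>j. N j * q j) (\<lambda>j. - N j * p j) (x$2) * (axis i 1 $ 2)
     = trig N (\<lambda>j. (axis i 1 $ 2) * N j * q j) (\<lambda>j. (- (axis i 1 $ 2)) * N j * p j) (x$2)"
  proof -
    define c :: real where "c = axis i 1 $ (2::2)"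
    have r1: "rapid N (\<lambda>j. N j * q j)" using rapid_shift[OF q, of 1] by simp
    have r2: "rapid N (\<lambda>j. - N j * p j)" using rapid_shift[OF p, of "-1"] by simp
    have e1: "(\<lambda>j. c * (N j * q j)) = (\<lambda>j. c * N j * q j)" by (simp add: mult.assoc)
    have e2: "(\<lambda>j. c * (- N j * p j)) = (\<lambda>j. (- c) * N j * p j)" by (simp add: mult.assoc)
    have "trig N (\<lambda>j. N j * q j) (\<lambda>j. - N j * p j) (x$2) * c = c * trig N (\<lambda>j. N j * q j) (\<lambda>j. - N j * p j) (x$2)"
      by (rule mult.commute)
    also have "\<dots> = trig N (\<lambda>j. c * N j * q j) (\<lambda>j. (- c) * N j * p j) (x$2)"
      using trig_scale[OF r1 r2, of c "x$2"] unfolding e1 e2 .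
    finally show ?thesis unfolding c_def .
  qed
  finally show "pdiff i (ufield N p q) x = ufield N (\<lambda>j. (axis i 1 $ 2) * N j * q j) (\<lambda>j. (- (axis i 1 $ 2)) * N j * p j) x"
    by (simp add: ufield_def)
qed

lemma ufield_Ck: "rapid N p \<Longrightarrow> rapid N q \<Longrightarrow> Ck k (ufield N p q)"
proof (induction k arbitrary: p q)
  case 0
  have "\<And>x. isCont (ufield N p q) x"
    using ufield_deriv[OF 0] has_derivative_continuous by blast
  then show ?case by (simp add: continuous_at_imp_continuous_on)
next
  case (Suc k)
  have c: "\<And>x. isCont (ufield N p q) x"
    using ufield_deriv[OF Suc.prems] has_derivative_continuous by blast
  have "\<forall>x. ufield N p q differentiable (at x)"
    using ufield_deriv[OF Suc.prems] differentiable_def by blast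
  moreover have "\<forall>i. Ck k (pdiff i (ufield N p q))"
    unfolding ufield_pdiff[OF Suc.prems]
    by (intro allI Suc.IH rapid_shift Suc.prems)
  ultimately show ?case using c by (simp add: continuous_at_imp_continuous_on)
qed




lemma series_integral:
  fixes f :: "nat \<Rightarrow> real \<Rightarrow> complex"
  assumes c: "\<And>i. continuous_on {a..b} (f i)"
    and M: "\<And>i t. norm (f i t) \<le> M i" "summable M"
    and I: "\<And>i. (f i has_integral I i) {a..b}"
  shows "I sums integral {a..b} (\<lambda>t. \<Sum>i. f i t)"
proof -
  have u: "uniform_limit {a..b} (\<lambda>n t. \<Sum>i<n. f i t) (\<lambda>t. \<Sum>i. f i t) sequentially"
    by (rule Weierstrass_m_test[OF _ M(2)]) (use M(1) in auto)
  have cn: "\<And>n. continuous_on {a..b} (\<lambda>t. \<Sum>i<n. f i t)"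
    using c by (intro continuous_intros) auto
  obtain I' J where I': "\<And>n. ((\<lambda>t. \<Sum>i<n. f i t) has_integral I' n) {a..b}"
    and J: "((\<lambda>t. \<Sum>i. f i t) has_integral J) {a..b}" and lim: "(I' \<longlonglongrightarrow> J)"
    by (rule uniform_limit_integral[OF u cn]) auto
  have "I' n = (\<Sum>i<n. I i)" for n
    using has_integral_unique[OF I'[of n] has_integral_sum[OF _ I, of "{..<n}"]] by simp
  then have "I' = (\<lambda>n. \<Sum>i<n. I i)" by (rule ext)
  then have "I sums J" using lim unfolding sums_def by simp
  then show ?thesis using J by (simp add: integral_unique)
qed

lemma cos_as_cis: "complex_of_real (cos x) = (cis x + cis (- x)) / 2"
  by (simp add: complex_eq_iff)

lemma cos_cis_integral:
  fixes L :: real and n k :: int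
  assumes "L > 0"
  shows "((\<lambda>t. complex_of_real (cos (kappa0 L * of_int n * t)) * cis (kappa0 L * of_int (- k) * t))
     has_integral (complex_of_real L / 2 * ((if n = k then 1 else 0) + (if n = - k then 1 else 0)))) {0..L}"
proof -
  have e: "complex_of_real (cos (kappa0 L * of_int n * t)) * cis (kappa0 L * of_int (- k) * t)
     = (cis (kappa0 L * of_int (n - k) * t) + cis (kappa0 L * of_int (- n - k) * t)) / 2" for t
  proof -
    have a: "cis (kappa0 L * of_int n * t) * cis (kappa0 L * of_int (- k) * t) = cis (kappa0 L * of_int (n - k) * t)"
      by (simp add: cis_mult) (simp add: algebra_simps)
    have b: "cis (- (kappa0 L * of_int n * t)) * cis (kappa0 L * of_int (- k) * t) = cis (kappa0 L * of_int (- n - k) * t)"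
      by (simp add: cis_mult) (simp add: algebra_simps)
    show ?thesis unfolding cos_as_cis using a b by (simp add: distrib_right add_divide_distrib)
  qed
  have "((\<lambda>t. (cis (kappa0 L * of_int (n - k) * t) + cis (kappa0 L * of_int (- n - k) * t)) / 2)
     has_integral ((if n - k = 0 then complex_of_real L else 0) + (if - n - k = 0 then complex_of_real L else 0)) / 2) {0..L}"
    by (intro has_integral_divide has_integral_add cis_int_integral assms)
  then show ?thesis unfolding e by (auto simp: algebra_simps)
qed




lemma gauss_bound:
  fixes a a' b :: real and j :: nat
  assumes "0 < a'" "a' < a"
  shows "exp (b * j - a * j^2) \<le> exp (b^2 / (4 * a')) * exp (- (a - a')) ^ j"
proof -
  have "0 \<le> (b - 2 * a' * j)^2" by simp
  then have "b * j \<le> b^2 / (4 * a') + a' * j^2"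
    using assms by (simp add: field_simps power2_eq_square)
  moreover have "real j \<le> real j ^ 2" by (cases j) (auto simp: power2_eq_square)
  then have "(a - a') * j \<le> (a - a') * j^2" using assms by (intro mult_left_mono) auto
  ultimately have "b * j - a * j^2 \<le> b^2 / (4 * a') + (- (a - a')) * j" by (simp add: algebra_simps)
  then have "exp (b * j - a * j^2) \<le> exp (b^2 / (4 * a') + (- (a - a')) * j)" by simp
  also have "\<dots> = exp (b^2 / (4 * a')) * exp (- (a - a')) ^ j"
    by (simp add: exp_add exp_of_nat_mult[symmetric] mult.commute)
  finally show ?thesis .
qed

lemma gauss_summable:
  fixes a b :: real
  assumes "0 < a"
  shows "summable (\<lambda>j::nat. exp (b * j - a * j^2))"
proof (rule summable_comparison_test)
  have "summable (\<lambda>j::nat. exp (b^2 / (4 * (a/2))) * exp (- (a - a/2)) ^ j)"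
    using assms by (intro summable_mult summable_geometric) auto
  then show "summable (\<lambda>j::nat. exp (b^2 / (4 * (a/2))) * exp (- (a - a/2)) ^ j)" .
  show "\<exists>N. \<forall>n\<ge>N. norm (exp (b * real n - a * (real n)\<^sup>2)) \<le> exp (b^2 / (4 * (a/2))) * exp (- (a - a/2)) ^ n"
    using gauss_bound[of "a/2" a b] assms by auto
qed

definition Nf :: "real \<Rightarrow> nat \<Rightarrow> nat \<Rightarrow> real" where
  "Nf L B j = kappa0 L * real (B ^ j)"

definition pc :: "real \<Rightarrow> nat \<Rightarrow> real" where
  "pc \<tau> j = exp (- \<tau> * real j ^ 2)"

lemma rapid_pc:
  assumes "L > 0" "B \<ge> 1" "\<tau> > 0"
  shows "rapid (Nf L B) (pc \<tau>)"
  unfolding rapid_def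
proof
  fix m :: nat
  have k: "kappa0 L > 0" using assms by (simp add: kappa0_def)
  have e: "\<bar>pc \<tau> j\<bar> * \<bar>Nf L B j\<bar> ^ m = kappa0 L ^ m * exp ((ln B * m) * j - \<tau> * j^2)" for j
  proof -
    have "real (B ^ j) ^ m = exp (ln B) ^ (j * m)"
      using assms by (simp add: power_mult)
    also have "\<dots> = exp (real (j * m) * ln B)" by (rule exp_of_nat_mult[symmetric])
    finally have "real (B ^ j) ^ m = exp (ln B * m * j)" by (simp add: mult_ac)
    then show ?thesis using k
      by (simp add: pc_def Nf_def power_mult_distrib exp_diff exp_minus field_simps)
  qed
  show "summable (\<lambda>j. \<bar>pc \<tau> j\<bar> * \<bar>Nf L B j\<bar> ^ m)"
    unfolding e by (intro summable_mult gauss_summable assms)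
qed

lemma rapid_zero: "rapid N (\<lambda>_. 0)"
  by (simp add: rapid_def)


definition U :: "real \<Rightarrow> nat \<Rightarrow> real \<Rightarrow> real^2 \<Rightarrow> real^2" where
  "U L B \<tau> = ufield (Nf L B) (pc \<tau>) (\<lambda>_. 0)"

definition ind :: "nat \<Rightarrow> nat \<Rightarrow> int \<Rightarrow> complex" where
  "ind B j k = (if int (B ^ j) = k then 1 else 0) + (if int (B ^ j) = - k then 1 else 0)"

lemma trig_cont:
  assumes "rapid N p" "rapid N q"
  shows "continuous_on UNIV (trig N p q)"
  using trig_deriv[OF assms] DERIV_isCont by (blast intro: continuous_at_imp_continuous_on)

lemma summable_pc:
  fixes L :: real and B :: nat
  assumes "L > 0" "B \<ge> 1" "\<tau> > 0"
  shows "summable (pc \<tau>)"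
proof -
  have "summable (\<lambda>j. \<bar>pc \<tau> j\<bar> * \<bar>Nf L B j\<bar> ^ 0)"
    using rapid_pc[OF assms] unfolding rapid_def by blast
  then have "summable (\<lambda>j. pc \<tau> j)" by (simp add: pc_def[abs_def])
  then show ?thesis by simp
qed

lemma psi_sums:
  assumes L: "L > 0" and B: "B \<ge> 1" and t: "\<tau> > 0"
  shows "(\<lambda>j. complex_of_real (L/2) * (complex_of_real (pc \<tau> j) * ind B j k))
     sums integral {0..L} (\<lambda>t. complex_of_real (trig (Nf L B) (pc \<tau>) (\<lambda>_. 0) t) * cis (kappa0 L * of_int (- k) * t))"
proof -
  define f where "f = (\<lambda>j t. complex_of_real (pc \<tau> j) *
      (complex_of_real (cos (kappa0 L * of_int (int (B ^ j)) * t)) * cis (kappa0 L * of_int (- k) * t)))"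
  have r: "rapid (Nf L B) (pc \<tau>)" using rapid_pc[OF L B t] .
  have eq: "complex_of_real (trig (Nf L B) (pc \<tau>) (\<lambda>_. 0) t) * cis (kappa0 L * of_int (- k) * t) = (\<Sum>j. f j t)" for t
  proof -
    have s: "summable (\<lambda>j. pc \<tau> j * cos (Nf L B j * t) + 0 * sin (Nf L B j * t))"
      by (rule trig_summable[OF r rapid_zero])
    have "complex_of_real (trig (Nf L B) (pc \<tau>) (\<lambda>_. 0) t) = (\<Sum>j. complex_of_real (pc \<tau> j * cos (Nf L B j * t) + 0 * sin (Nf L B j * t)))"
      unfolding trig_def by (rule suminf_of_real[OF s])
    moreover have "summable (\<lambda>j. complex_of_real (pc \<tau> j * cos (Nf L B j * t) + 0 * sin (Nf L B j * t)))"
      by (rule summable_of_real[OF s])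
    ultimately have "complex_of_real (trig (Nf L B) (pc \<tau>) (\<lambda>_. 0) t) * cis (kappa0 L * of_int (- k) * t)
       = (\<Sum>j. complex_of_real (pc \<tau> j * cos (Nf L B j * t) + 0 * sin (Nf L B j * t)) * cis (kappa0 L * of_int (- k) * t))"
      by (simp add: suminf_mult2)
    also have "\<dots> = (\<Sum>j. f j t)"
      by (rule suminf_cong) (simp add: f_def Nf_def)
    finally show ?thesis .
  qed
  have c: "continuous_on {0..L} (f j)" for j
    unfolding f_def by (intro continuous_intros)
  have M: "norm (f j t) \<le> pc \<tau> j" for j t
  proof -
    have "norm (f j t) = pc \<tau> j * \<bar>cos (kappa0 L * of_int (int (B ^ j)) * t)\<bar>"
      by (simp add: f_def norm_mult pc_def)
    also have "\<dots> \<le> pc \<tau> j * 1" by (intro mult_left_mono) (auto simp: pc_def)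
    finally show ?thesis by simp
  qed
  have I: "(f j has_integral complex_of_real (L/2) * (complex_of_real (pc \<tau> j) * ind B j k)) {0..L}" for j
  proof -
    have "(f j has_integral complex_of_real (pc \<tau> j) * (complex_of_real L / 2 *
         ((if int (B ^ j) = k then 1 else 0) + (if int (B ^ j) = - k then 1 else 0)))) {0..L}"
      unfolding f_def by (intro has_integral_mult_right cos_cis_integral L)
    then show ?thesis by (simp add: ind_def mult_ac)
  qed
  have "(\<lambda>j. complex_of_real (L/2) * (complex_of_real (pc \<tau> j) * ind B j k)) sums integral {0..L} (\<lambda>t. \<Sum>j. f j t)"
    by (rule series_integral[OF c M summable_pc[OF L B t] I])
  then show ?thesis using eq by simp
qed


lemma U_nth1: "U L B \<tau> x $ 1 = trig (Nf L B) (pc \<tau>) (\<lambda>_. 0) (x$2)"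
  by (simp add: U_def ufield_def)

lemma U_nth2: "U L B \<tau> x $ 2 = 0"
  by (simp add: U_def ufield_def axis_def)

lemma fc2: "fcoeff L (U L B \<tau>) k 2 = 0"
  by (simp add: fcoeff_def U_nth2)

definition Psi :: "real \<Rightarrow> nat \<Rightarrow> real \<Rightarrow> int \<Rightarrow> complex" where
  "Psi L B \<tau> k = integral {0..L} (\<lambda>t. complex_of_real (trig (Nf L B) (pc \<tau>) (\<lambda>_. 0) t) * cis (kappa0 L * of_int (- k) * t))"

lemma fc_formula:
  assumes L: "L > 0" and B: "B \<ge> 1" and t: "\<tau> > 0"
  shows "fcoeff L (U L B \<tau>) (k1, k2) 1 = complex_of_real (1 / L^2) * ((if k1 = 0 then complex_of_real L else 0) * Psi L B \<tau> k2)"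
proof -
  define \<phi> where "\<phi> = (\<lambda>s. cis (kappa0 L * of_int (- k1) * s))"
  define \<psi> where "\<psi> = (\<lambda>t. complex_of_real (trig (Nf L B) (pc \<tau>) (\<lambda>_. 0) t) * cis (kappa0 L * of_int (- k2) * t))"
  have e: "complex_of_real (U L B \<tau> x $ 1) *
            cis (- kappa0 L * (real_of_int (fst (k1,k2)) * x $ 1 + real_of_int (snd (k1,k2)) * x $ 2)) = \<phi> (x$1) * \<psi> (x$2)" for x
  proof -
    have "cis (- kappa0 L * (real_of_int k1 * x $ 1 + real_of_int k2 * x $ 2))
        = cis (kappa0 L * of_int (- k1) * x$1) * cis (kappa0 L * of_int (- k2) * x$2)"
      by (simp add: cis_mult) (simp add: algebra_simps)
    then show ?thesis by (simp add: \<phi>_def \<psi>_def U_nth1 mult_ac)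
  qed
  have c1: "continuous_on UNIV \<phi>" unfolding \<phi>_def by (intro continuous_intros)
  have tc: "continuous_on UNIV (trig (Nf L B) (pc \<tau>) (\<lambda>_. 0))"
    by (rule trig_cont[OF rapid_pc[OF L B t] rapid_zero])
  have c2: "continuous_on UNIV \<psi>" unfolding \<psi>_def
    by (intro continuous_intros continuous_on_compose2[OF continuous_on_of_real tc]) auto
  have "fcoeff L (U L B \<tau>) (k1, k2) 1 = complex_of_real (1 / L^2) * integral (cbox 0 (vec L)) (\<lambda>x::real^2. \<phi> (x$1) * \<psi> (x$2))"
    unfolding fcoeff_def e by simp
  also have "\<dots> = complex_of_real (1 / L^2) * (integral {0..L} \<phi> * integral {0..L} \<psi>)"
    by (simp add: sep2d[OF c1 c2])
  also have "integral {0..L} \<phi> = (if k1 = 0 then complex_of_real L else 0)"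
    unfolding \<phi>_def using integral_unique[OF cis_int_integral[OF L, of "- k1"]] by simp
  finally show ?thesis by (simp add: Psi_def \<psi>_def)
qed

lemma ind_single:
  assumes "B \<ge> 2" "\<bar>k\<bar> = int (B ^ j0)"
  shows "ind B j k = (if j = j0 then 1 else 0)"
proof -
  define x where "x = int B ^ j"
  define y where "y = int B ^ j0"
  have x: "x > 0" "y > 0" using assms by (auto simp: x_def y_def)
  have inj: "x = y \<longleftrightarrow> j = j0"
    using assms by (simp add: x_def y_def power_inject_exp)
  have ky: "\<bar>k\<bar> = y" using assms by (simp add: y_def)
  have 1: "(x = k \<or> x = - k) \<longleftrightarrow> j = j0" using x inj ky by auto
  have 2: "\<not> (x = k \<and> x = - k)" using x by auto
  show ?thesis unfolding ind_def using 1 2 by (auto simp: x_def)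
qed

lemma ind_zero:
  assumes "\<forall>j0. \<bar>k\<bar> \<noteq> int (B ^ j0)"
  shows "ind B j k = 0"
proof -
  define x where "x = int B ^ j"
  have "x \<ge> 0" by (simp add: x_def)
  moreover have "\<bar>k\<bar> \<noteq> x" using assms[rule_format, of j] by (simp add: x_def)
  ultimately have "x \<noteq> k" "x \<noteq> - k" by auto
  then show ?thesis unfolding ind_def by (simp add: x_def)
qed

lemma Psi_single:
  assumes L: "L > 0" and B: "B \<ge> 2" and t: "\<tau> > 0" and k: "\<bar>k\<bar> = int (B ^ j0)"
  shows "Psi L B \<tau> k = complex_of_real (L/2 * pc \<tau> j0)"
proof -
  have s: "(\<lambda>j. complex_of_real (L/2) * (complex_of_real (pc \<tau> j) * ind B j k)) sums Psi L B \<tau> k"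
    unfolding Psi_def by (rule psi_sums) (use L B t in auto)
  have "(\<lambda>j. complex_of_real (L/2) * (complex_of_real (pc \<tau> j) * ind B j k))
      = (\<lambda>j. if j = j0 then complex_of_real (L/2 * pc \<tau> j) else 0)"
    using ind_single[OF B k] by (auto simp: fun_eq_iff)
  then have "(\<lambda>j. if j = j0 then complex_of_real (L/2 * pc \<tau> j) else 0) sums Psi L B \<tau> k" using s by simp
  moreover have "(\<lambda>j. if j = j0 then complex_of_real (L/2 * pc \<tau> j) else 0) sums complex_of_real (L/2 * pc \<tau> j0)"
    by (rule sums_single)
  ultimately show ?thesis by (rule sums_unique2)
qed

lemma Psi_zero:
  assumes L: "L > 0" and B: "B \<ge> 1" and t: "\<tau> > 0" and k: "\<forall>j0. \<bar>k\<bar> \<noteq> int (B ^ j0)"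
  shows "Psi L B \<tau> k = 0"
proof -
  have s: "(\<lambda>j. complex_of_real (L/2) * (complex_of_real (pc \<tau> j) * ind B j k)) sums Psi L B \<tau> k"
    unfolding Psi_def by (rule psi_sums) (use L B t in auto)
  then have "(\<lambda>j. 0) sums Psi L B \<tau> k" using ind_zero[OF k] by simp
  then show ?thesis using sums_zero sums_unique2 by blast
qed

lemma fc_val:
  assumes L: "L > 0" and B: "B \<ge> 2" and t: "\<tau> > 0" and k: "\<bar>k2\<bar> = int (B ^ j0)"
  shows "fcoeff L (U L B \<tau>) (0, k2) 1 = complex_of_real (pc \<tau> j0 / 2)"
proof -
  have "fcoeff L (U L B \<tau>) (0, k2) 1 = complex_of_real (1 / L^2) * (complex_of_real L * complex_of_real (L/2 * pc \<tau> j0))"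
    using fc_formula[OF L _ t, of B 0 k2] B Psi_single[OF L B t k] by simp
  also have "\<dots> = complex_of_real (pc \<tau> j0 / 2)"
    using L by (simp add: field_simps power2_eq_square flip: of_real_mult)
  finally show ?thesis .
qed

lemma fc_zero:
  assumes L: "L > 0" and B: "B \<ge> 1" and t: "\<tau> > 0" and k: "k1 \<noteq> 0 \<or> (\<forall>j0. \<bar>k2\<bar> \<noteq> int (B ^ j0))"
  shows "fcoeff L (U L B \<tau>) (k1, k2) 1 = 0"
  using fc_formula[OF L B t, of k1 k2] Psi_zero[OF L B t, of k2] k by auto




definition T :: "real \<Rightarrow> nat \<Rightarrow> real \<Rightarrow> nat \<Rightarrow> nat \<Rightarrow> real" where
  "T L B \<tau> \<alpha> j = L^2 * ((kappa0 L)^2 * real (B ^ j)^2) ^ \<alpha> * (pc \<tau> j / 2)^2"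

lemma apow_val:
  assumes L: "L > 0" and B: "B \<ge> 2" and t: "\<tau> > 0"
  shows "Apow_term L \<alpha> (U L B \<tau>) (0, int (B ^ j)) = T L B \<tau> \<alpha> j"
    and "Apow_term L \<alpha> (U L B \<tau>) (0, - int (B ^ j)) = T L B \<tau> \<alpha> j"
proof -
  have p: "pc \<tau> j \<ge> 0" by (simp add: pc_def)
  show "Apow_term L \<alpha> (U L B \<tau>) (0, int (B ^ j)) = T L B \<tau> \<alpha> j"
  proof -
    have e: "fcoeff L (U L B \<tau>) (0, int (B ^ j)) 1 = complex_of_real (pc \<tau> j / 2)"
      by (rule fc_val[OF L B t]) simp
    have cm: "cmod (fcoeff L (U L B \<tau>) (0, int (B ^ j)) 1) = pc \<tau> j / 2"
      unfolding e norm_of_real using p by simp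
    show ?thesis by (simp only: Apow_term_def T_def fc2 norm_zero cm) (simp add: stokes_eig_def)
  qed
  show "Apow_term L \<alpha> (U L B \<tau>) (0, - int (B ^ j)) = T L B \<tau> \<alpha> j"
  proof -
    have e: "fcoeff L (U L B \<tau>) (0, - int (B ^ j)) 1 = complex_of_real (pc \<tau> j / 2)"
      by (rule fc_val[OF L B t]) simp
    have cm: "cmod (fcoeff L (U L B \<tau>) (0, - int (B ^ j)) 1) = pc \<tau> j / 2"
      unfolding e norm_of_real using p by simp
    show ?thesis by (simp only: Apow_term_def T_def fc2 norm_zero cm) (simp add: stokes_eig_def)
  qed
qed

lemma apow_zero:
  assumes L: "L > 0" and B: "B \<ge> 2" and t: "\<tau> > 0"
    and k: "k \<notin> range (\<lambda>j. (0, int (B ^ j))) \<union> range (\<lambda>j. (0, - int (B ^ j)))"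
  shows "Apow_term L \<alpha> (U L B \<tau>) k = 0"
proof -
  obtain k1 k2 where kk: "k = (k1, k2)" by force
  have "k1 \<noteq> 0 \<or> (\<forall>j0. \<bar>k2\<bar> \<noteq> int (B ^ j0))"
  proof (rule ccontr)
    assume "\<not> ?thesis"
    then obtain j0 where "k1 = 0" "\<bar>k2\<bar> = int (B ^ j0)" by auto
    then have "k = (0, int (B ^ j0)) \<or> k = (0, - int (B ^ j0))" using kk by (cases "k2 \<ge> 0") auto
    then show False using k by auto
  qed
  then have "fcoeff L (U L B \<tau>) k 1 = 0" using fc_zero[OF L _ t] B kk by auto
  then show ?thesis by (simp add: Apow_term_def fc2)
qed

lemma apow_has_sum:
  assumes L: "L > 0" and B: "B \<ge> 2" and t: "\<tau> > 0" and s: "summable (T L B \<tau> \<alpha>)"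
  shows "(Apow_term L \<alpha> (U L B \<tau>) has_sum (2 * suminf (T L B \<tau> \<alpha>))) UNIV"
proof -
  define h1 where "h1 = (\<lambda>j::nat. ((0::int), int (B ^ j)))"
  define h2 where "h2 = (\<lambda>j::nat. ((0::int), - int (B ^ j)))"
  have Tnn: "T L B \<tau> \<alpha> j \<ge> 0" for j by (simp add: T_def)
  have hs: "(T L B \<tau> \<alpha> has_sum suminf (T L B \<tau> \<alpha>)) UNIV"
    by (rule sums_nonneg_imp_has_sum[OF summable_sums[OF s] Tnn])
  have inj1: "inj h1" unfolding h1_def inj_def using B by (auto simp: power_inject_exp)
  have inj2: "inj h2" unfolding h2_def inj_def using B by (auto simp: power_inject_exp)
  have c1: "Apow_term L \<alpha> (U L B \<tau>) \<circ> h1 = T L B \<tau> \<alpha>"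
    using apow_val(1)[OF L B t] by (auto simp: h1_def fun_eq_iff)
  have c2: "Apow_term L \<alpha> (U L B \<tau>) \<circ> h2 = T L B \<tau> \<alpha>"
    using apow_val(2)[OF L B t] by (auto simp: h2_def fun_eq_iff)
  have a1: "(Apow_term L \<alpha> (U L B \<tau>) has_sum suminf (T L B \<tau> \<alpha>)) (range h1)"
    by (subst has_sum_reindex[OF inj1]) (simp add: c1 hs)
  have a2: "(Apow_term L \<alpha> (U L B \<tau>) has_sum suminf (T L B \<tau> \<alpha>)) (range h2)"
    by (subst has_sum_reindex[OF inj2]) (simp add: c2 hs)
  have disj: "range h1 \<inter> range h2 = {}"
  proof -
    have "h1 i \<noteq> h2 j" for i j
    proof -
      have p1: "int B ^ i > 0" and p2: "int B ^ j > 0" using B by simp_all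
      have "int B ^ i \<noteq> - (int B ^ j)" using p1 p2 by linarith
      then show ?thesis unfolding h1_def h2_def by simp
    qed
    then show ?thesis by (metis (no_types, lifting) disjoint_iff imageE)
  qed
  have "(Apow_term L \<alpha> (U L B \<tau>) has_sum (suminf (T L B \<tau> \<alpha>) + suminf (T L B \<tau> \<alpha>))) (range h1 \<union> range h2)"
    by (rule has_sum_Un_disjoint[OF a1 a2 disj])
  then have "(Apow_term L \<alpha> (U L B \<tau>) has_sum (2 * suminf (T L B \<tau> \<alpha>))) (range h1 \<union> range h2)"
    by simp
  moreover have "\<And>k. k \<in> UNIV - (range h1 \<union> range h2) \<Longrightarrow> Apow_term L \<alpha> (U L B \<tau>) k = 0"
    using apow_zero[OF L B t] unfolding h1_def h2_def by blast
  ultimately show ?thesis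
    by (subst has_sum_cong_neutral[where T="range h1 \<union> range h2" and g="Apow_term L \<alpha> (U L B \<tau>)"]) auto
qed




lemma cos_per_nat: "cos (x + 2 * pi * real n) = cos x"
proof (induction n arbitrary: x)
  case (Suc n)
  have "cos (x + 2 * pi * real (Suc n)) = cos ((x + 2 * pi * real n) + 2 * pi)"
    by (rule arg_cong[where f=cos]) (simp add: algebra_simps)
  also have "\<dots> = cos (x + 2 * pi * real n)" by (rule cos_periodic)
  also have "\<dots> = cos x" by (rule Suc.IH)
  finally show ?case .
qed simp

lemma sin_per_nat: "sin (x + 2 * pi * real n) = sin x"
proof (induction n arbitrary: x)
  case (Suc n)
  have "sin (x + 2 * pi * real (Suc n)) = sin ((x + 2 * pi * real n) + 2 * pi)"
    by (rule arg_cong[where f=sin]) (simp add: algebra_simps)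
  also have "\<dots> = sin (x + 2 * pi * real n)" by (rule sin_periodic)
  also have "\<dots> = sin x" by (rule Suc.IH)
  finally show ?case .
qed simp

lemma U_periodic:
  assumes L: "L > 0"
  shows "periodic_field L (U L B \<tau>)"
  unfolding periodic_field_def
proof (intro allI)
  fix x :: "real^2" and i :: 2
  have tp: "trig (Nf L B) (pc \<tau>) (\<lambda>_. 0) (y + L) = trig (Nf L B) (pc \<tau>) (\<lambda>_. 0) y" for y
  proof -
    have kL: "kappa0 L * L = 2 * pi" using L by (simp add: kappa0_def)
    have "Nf L B j * (y + L) = Nf L B j * y + real (B ^ j) * (kappa0 L * L)" for j
      by (simp add: Nf_def algebra_simps)
    then have "Nf L B j * (y + L) = Nf L B j * y + 2 * pi * real (B ^ j)" for j
      unfolding kL by (simp add: mult_ac)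
    moreover have cp: "cos (z + 2 * pi * real B ^ j) = cos z" for z j
      using cos_per_nat[of z "B ^ j"] by simp
    ultimately show ?thesis unfolding trig_def by (simp add: cp)
  qed
  have "(x + L *\<^sub>R axis i 1) $ 2 = x$2 + (if i = 2 then L else 0)"
    by (simp add: axis_def)
  then show "U L B \<tau> (x + L *\<^sub>R axis i 1) = U L B \<tau> x"
    unfolding U_def ufield_def using tp by (cases "i = 2") auto
qed

lemma U_smooth:
  assumes "L > 0" "B \<ge> 1" "\<tau> > 0"
  shows "smooth_field (U L B \<tau>)"
  unfolding smooth_field_def U_def using ufield_Ck[OF rapid_pc[OF assms] rapid_zero] by blast

lemma U_in_H:
  assumes L: "L > 0" and B: "B \<ge> 2" and t: "\<tau> > 0"
  shows "in_H L (U L B \<tau>)"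
  unfolding in_H_def
proof (intro conjI allI)
  have "Ck 0 (U L B \<tau>)"
    using U_smooth[OF L _ t, of B] B unfolding smooth_field_def by simp
  then have "continuous_on UNIV (U L B \<tau>)" by simp
  then have "continuous_on (cbox 0 (vec L)) (\<lambda>x. (norm (U L B \<tau> x))^2)"
    by (intro continuous_intros) (auto intro: continuous_on_subset)
  then show "(\<lambda>x. (norm (U L B \<tau> x))^2) integrable_on cbox 0 (vec L)"
    by (rule integrable_continuous)
next
  fix j :: 2
  have "\<forall>j0. \<bar>0::int\<bar> \<noteq> int (B ^ j0)" using B by simp
  then have "fcoeff L (U L B \<tau>) (0, 0) 1 = 0" using fc_zero[OF L _ t] B by auto
  then show "fcoeff L (U L B \<tau>) (0, 0) j = 0" using fc2 exhaust_2[of j] by auto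
next
  fix k :: "int \<times> int"
  obtain k1 k2 where kk: "k = (k1, k2)" by force
  have "of_int k1 * fcoeff L (U L B \<tau>) (k1, k2) 1 = 0"
    using fc_zero[OF L _ t, of B k1 k2] B by (cases "k1 = 0") auto
  then show "of_int (fst k) * fcoeff L (U L B \<tau>) k 1 + of_int (snd k) * fcoeff L (U L B \<tau>) k 2 = 0"
    by (simp add: kk fc2)
qed

lemma T_eq:
  assumes B: "B \<ge> 1"
  shows "T L B \<tau> \<alpha> j = (L^2 / 4 * kappa0 L ^ (2 * \<alpha>)) * exp ((2 * real \<alpha> * ln B) * j - (2 * \<tau>) * j^2)"
proof -
  have a: "((kappa0 L)^2 * real (B ^ j)^2) ^ \<alpha> = kappa0 L ^ (2 * \<alpha>) * exp (ln B) ^ (j * 2 * \<alpha>)"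
    using B by (simp add: power_mult_distrib power_mult[symmetric] mult_ac)
  have b: "exp (ln B) ^ (j * 2 * \<alpha>) = exp ((2 * real \<alpha> * ln B) * j)"
    by (simp add: exp_of_nat_mult[symmetric] mult_ac)
  have c: "(pc \<tau> j / 2)^2 = exp (- (2 * \<tau>) * j^2) / 4"
    by (simp add: pc_def power2_eq_square exp_add[symmetric] power_divide)
  show ?thesis unfolding T_def a b c
    by (simp add: exp_diff exp_minus field_simps)
qed




lemma apow_norm2_val:
  fixes L \<tau> :: real and B :: nat
  assumes L: "L > 0" and B: "B \<ge> 2" and t: "\<tau> > 0"
  shows "Apow_term L \<alpha> (U L B \<tau>) summable_on UNIV"
    and "Apow_norm2 L \<alpha> (U L B \<tau>) = 2 * (L^2 / 4 * kappa0 L ^ (2 * \<alpha>)) *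
            (\<Sum>j. exp ((2 * real \<alpha> * ln B) * j - (2 * \<tau>) * (real j)^2))"
proof -
  define C where "C = L^2 / 4 * kappa0 L ^ (2 * \<alpha>)"
  define g where "g = (\<lambda>j::nat. exp ((2 * real \<alpha> * ln B) * j - (2 * \<tau>) * (real j)^2))"
  have Te: "T L B \<tau> \<alpha> = (\<lambda>j. C * g j)"
    using T_eq[of B L \<tau> \<alpha>] B by (auto simp: C_def g_def fun_eq_iff)
  have sg: "summable g" unfolding g_def using t by (intro gauss_summable) auto
  have sT: "summable (T L B \<tau> \<alpha>)" unfolding Te by (intro summable_mult sg)
  have hs: "(Apow_term L \<alpha> (U L B \<tau>) has_sum (2 * suminf (T L B \<tau> \<alpha>))) UNIV"
    by (rule apow_has_sum[OF L B t sT])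
  then show "Apow_term L \<alpha> (U L B \<tau>) summable_on UNIV" by (auto simp: has_sum_iff)
  have "Apow_norm2 L \<alpha> (U L B \<tau>) = 2 * suminf (T L B \<tau> \<alpha>)"
    using hs unfolding Apow_norm2_def by (auto simp: has_sum_iff)
  also have "suminf (T L B \<tau> \<alpha>) = C * suminf g" unfolding Te by (rule suminf_mult[OF sg])
  finally show "Apow_norm2 L \<alpha> (U L B \<tau>) = 2 * (L^2 / 4 * kappa0 L ^ (2 * \<alpha>)) *
            (\<Sum>j. exp ((2 * real \<alpha> * ln B) * j - (2 * \<tau>) * (real j)^2))"
    by (simp add: C_def g_def)
qed

lemma apow_term_nonneg: "Apow_term L \<alpha> u k \<ge> 0"
proof -
  have "stokes_eig L k \<ge> 0" by (simp add: stokes_eig_def)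
  then show ?thesis by (simp add: Apow_term_def)
qed

theorem proposition10p3:
  fixes L \<nu> \<sigma>1 \<sigma>2 :: real
  assumes "L > 0" and "\<nu> > 0" and "0 < \<sigma>1" and "\<sigma>1 < \<sigma>2"
  shows "gevrey_class L \<nu> \<sigma>1 \<subset> gevrey_class L \<nu> \<sigma>2"
proof
  note L = assms(1) and nu = assms(2) and s1 = assms(3) and s12 = assms(4)
  have kpos: "kappa0 L > 0" using L by (simp add: kappa0_def)
  show "gevrey_class L \<nu> \<sigma>1 \<subseteq> gevrey_class L \<nu> \<sigma>2"
  proof
    fix u assume "u \<in> gevrey_class L \<nu> \<sigma>1"
    then obtain c0 where u: "smooth_field u" "periodic_field L u" "in_H L u"
      and c: "\<And>\<alpha>. Apow_term L \<alpha> u summable_on UNIV \<and>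
             Apow_norm2 L \<alpha> u / (\<nu>^2 * (kappa0 L) ^ (2 * \<alpha>)) \<le> c0 * exp (\<sigma>1 * (real \<alpha>)^2)"
      unfolding gevrey_class_def by blast
    have nn: "Apow_norm2 L \<alpha> u / (\<nu>^2 * (kappa0 L) ^ (2 * \<alpha>)) \<ge> 0" for \<alpha>
      unfolding Apow_norm2_def by (intro divide_nonneg_nonneg infsum_nonneg apow_term_nonneg) auto
    have c0: "c0 \<ge> 0" using c[of 0] nn[of 0] by simp
    have "Apow_term L \<alpha> u summable_on UNIV \<and>
             Apow_norm2 L \<alpha> u / (\<nu>^2 * (kappa0 L) ^ (2 * \<alpha>)) \<le> c0 * exp (\<sigma>2 * (real \<alpha>)^2)" for \<alpha>
    proof -
      have "c0 * exp (\<sigma>1 * (real \<alpha>)^2) \<le> c0 * exp (\<sigma>2 * (real \<alpha>)^2)"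
        using c0 s12 by (intro mult_left_mono) (auto intro: mult_right_mono)
      then show ?thesis using c[of \<alpha>] by linarith
    qed
    then show "u \<in> gevrey_class L \<nu> \<sigma>2" using u unfolding gevrey_class_def by blast
  qed
  obtain n :: nat where n: "2 / (\<sigma>2 - \<sigma>1) < real n" using reals_Archimedean2 by blast
  define D :: nat where "D = Suc n"
  have Dpos: "real D \<ge> 1" by (simp add: D_def)
  have Dgap: "real D * (\<sigma>2 - \<sigma>1) > 2"
  proof -
    have "2 < real n * (\<sigma>2 - \<sigma>1)" using n s12 by (simp add: field_simps)
    also have "\<dots> \<le> real D * (\<sigma>2 - \<sigma>1)" using s12 by (intro mult_right_mono) (auto simp: D_def)
    finally show ?thesis .
  qed
  define E where "E = exp (real D * \<sigma>1)"
  have E1: "E > 1" unfolding E_def using Dpos s1 by simp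
  define B :: nat where "B = nat \<lfloor>E\<rfloor> + 1"
  have BE: "E < real B" "real B \<le> E + 1"
  proof -
    have "\<lfloor>E\<rfloor> \<ge> 0" using E1 by simp
    then have "real B = of_int \<lfloor>E\<rfloor> + 1" by (simp add: B_def)
    then show "E < real B" "real B \<le> E + 1" by linarith+
  qed
  have B2: "B \<ge> 2"
  proof -
    have "real B > 1" using BE E1 by linarith
    then show ?thesis by simp
  qed
  define \<beta> where "\<beta> = ln (real B)"
  have \<beta>1: "\<beta> > real D * \<sigma>1"
  proof -
    have "ln E < ln (real B)" using BE E1 by simp
    then show ?thesis by (simp add: \<beta>_def E_def)
  qed
  have \<beta>2: "\<beta> < real D * \<sigma>2"
  proof -
    have "exp (real D * \<sigma>2) = E * exp (real D * (\<sigma>2 - \<sigma>1))"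
      by (simp add: E_def exp_add[symmetric] algebra_simps)
    also have "\<dots> \<ge> E * (1 + real D * (\<sigma>2 - \<sigma>1))"
      using E1 by (intro mult_left_mono exp_ge_add_one_self) auto
    moreover have "E * 3 \<le> E * (1 + real D * (\<sigma>2 - \<sigma>1))" using Dgap E1 by (intro mult_left_mono) auto
    ultimately have "exp (real D * \<sigma>2) > E + 1" using E1 by linarith
    then have "real B < exp (real D * \<sigma>2)" using BE by simp
    then have "ln (real B) < ln (exp (real D * \<sigma>2))" using B2 by (subst ln_less_cancel_iff) auto
    then have "ln (real B) < real D * \<sigma>2" by simp
    then show ?thesis by (simp add: \<beta>_def)
  qed
  have \<beta>pos: "\<beta> > 0" using \<beta>1 Dpos s1 by (smt (verit) mult_pos_pos)
  define \<tau> where "\<tau> = real D * \<beta> / 2"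
  have tpos: "\<tau> > 0" using \<beta>pos Dpos by (simp add: \<tau>_def)
  define u where "u = U L B \<tau>"
  define K where "K = L^2 / (2 * \<nu>^2)"
  have Kpos: "K > 0" using L nu by (simp add: K_def)
  define G where "G = (\<lambda>\<alpha>::nat. \<Sum>j. exp ((2 * real \<alpha> * ln B) * j - (2 * \<tau>) * (real j)^2))"
  have ratio: "Apow_norm2 L \<alpha> u / (\<nu>^2 * (kappa0 L) ^ (2 * \<alpha>)) = K * G \<alpha>" for \<alpha>
    unfolding u_def apow_norm2_val(2)[OF L B2 tpos] using kpos nu
    by (simp add: K_def G_def field_simps power2_eq_square)
  have sG: "summable (\<lambda>j::nat. exp ((2 * real \<alpha> * ln B) * j - (2 * \<tau>) * (real j)^2))" for \<alpha>
    using tpos by (intro gauss_summable) auto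
  have base: "u \<in> {u. smooth_field u \<and> periodic_field L u \<and> in_H L u}"
    unfolding u_def using U_smooth[OF L _ tpos] U_periodic[OF L] U_in_H[OF L B2 tpos] B2 by auto
  define a' where "a' = \<beta>^2 / \<sigma>2"
  define r where "r = exp (- (2 * \<tau> - a'))"
  have a'pos: "a' > 0" using \<beta>pos s1 s12 by (simp add: a'_def)
  have a'lt: "a' < 2 * \<tau>"
  proof -
    have "\<beta> * \<beta> < \<beta> * (real D * \<sigma>2)" using \<beta>2 \<beta>pos by simp
    then have "\<beta>^2 / \<sigma>2 < real D * \<beta>" using s1 s12 by (simp add: field_simps power2_eq_square)
    then show ?thesis by (simp add: a'_def \<tau>_def)
  qed
  have r01: "r < 1" "r > 0" using a'lt by (auto simp: r_def)
  have Gle: "G \<alpha> \<le> exp (\<sigma>2 * (real \<alpha>)^2) / (1 - r)" for \<alpha>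
  proof -
    have bnd: "exp ((2 * real \<alpha> * ln B) * j - (2 * \<tau>) * (real j)^2) \<le> exp (\<sigma>2 * (real \<alpha>)^2) * r ^ j" for j :: nat
    proof -
      have "exp ((2 * real \<alpha> * ln B) * j - (2 * \<tau>) * (real j)^2) \<le> exp ((2 * real \<alpha> * ln B)^2 / (4 * a')) * r ^ j"
        unfolding r_def using gauss_bound[OF a'pos a'lt, of "2 * real \<alpha> * ln B" j] by simp
      also have "(2 * real \<alpha> * ln B)^2 / (4 * a') = \<sigma>2 * (real \<alpha>)^2"
        using \<beta>pos s1 s12 by (simp add: a'_def \<beta>_def[symmetric] field_simps power2_eq_square)
      finally show ?thesis .
    qed
    have sr: "summable (\<lambda>j. exp (\<sigma>2 * (real \<alpha>)^2) * r ^ j)"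
      using r01 by (intro summable_mult summable_geometric) auto
    have "G \<alpha> \<le> (\<Sum>j. exp (\<sigma>2 * (real \<alpha>)^2) * r ^ j)"
      unfolding G_def by (rule suminf_le[OF bnd sG sr])
    also have "\<dots> = exp (\<sigma>2 * (real \<alpha>)^2) * (1 / (1 - r))"
      using r01 by (simp add: suminf_mult summable_geometric suminf_geometric)
    finally show ?thesis by simp
  qed
  have in2: "u \<in> gevrey_class L \<nu> \<sigma>2"
  proof -
    have "Apow_term L \<alpha> u summable_on UNIV \<and>
          Apow_norm2 L \<alpha> u / (\<nu>^2 * (kappa0 L) ^ (2 * \<alpha>)) \<le> (K / (1 - r)) * exp (\<sigma>2 * (real \<alpha>)^2)" for \<alpha>
    proof
      show "Apow_term L \<alpha> u summable_on UNIV" unfolding u_def by (rule apow_norm2_val(1)[OF L B2 tpos])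
      have "K * G \<alpha> \<le> K * (exp (\<sigma>2 * (real \<alpha>)^2) / (1 - r))" using Kpos Gle[of \<alpha>] by (intro mult_left_mono) auto
      then show "Apow_norm2 L \<alpha> u / (\<nu>^2 * (kappa0 L) ^ (2 * \<alpha>)) \<le> (K / (1 - r)) * exp (\<sigma>2 * (real \<alpha>)^2)"
        unfolding ratio by simp
    qed
    then show ?thesis using base unfolding gevrey_class_def by blast
  qed
  have notin1: "u \<notin> gevrey_class L \<nu> \<sigma>1"
  proof
    assume "u \<in> gevrey_class L \<nu> \<sigma>1"
    then obtain c0 where c: "\<And>\<alpha>. Apow_norm2 L \<alpha> u / (\<nu>^2 * (kappa0 L) ^ (2 * \<alpha>)) \<le> c0 * exp (\<sigma>1 * (real \<alpha>)^2)"
      unfolding gevrey_class_def by blast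
    define \<delta> where "\<delta> = real D * (\<beta> - real D * \<sigma>1)"
    have \<delta>pos: "\<delta> > 0" using \<beta>1 Dpos by (simp add: \<delta>_def)
    obtain m :: nat where m: "c0 / (K * \<delta>) < real m" using reals_Archimedean2 by blast
    have low: "exp (\<delta> * (real m)^2) \<le> c0 / K"
    proof -
      have "exp ((2 * real (D * m) * ln B) * m - (2 * \<tau>) * (real m)^2) \<le> G (D * m)"
      proof -
        have "sum (\<lambda>j::nat. exp ((2 * real (D * m) * ln B) * j - (2 * \<tau>) * (real j)^2)) {m} \<le> G (D * m)"
          unfolding G_def by (rule sum_le_suminf[OF sG]) auto
        then show ?thesis by simp
      qed
      moreover have "(2 * real (D * m) * ln B) * m - (2 * \<tau>) * (real m)^2 = real D * \<beta> * (real m)^2"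
        by (simp add: \<tau>_def \<beta>_def power2_eq_square algebra_simps)
      ultimately have "K * exp (real D * \<beta> * (real m)^2) \<le> c0 * exp (\<sigma>1 * (real (D * m))^2)"
        using c[of "D * m"] Kpos unfolding ratio by (smt (verit) mult_left_mono)
      then have "K * exp (real D * \<beta> * (real m)^2) / exp (\<sigma>1 * (real (D * m))^2) \<le> c0"
        by (simp add: divide_le_eq)
      moreover have "exp (real D * \<beta> * (real m)^2) / exp (\<sigma>1 * (real (D * m))^2) = exp (\<delta> * (real m)^2)"
        by (simp add: exp_diff[symmetric] \<delta>_def power2_eq_square algebra_simps)
      ultimately have "K * exp (\<delta> * (real m)^2) \<le> c0" by (metis times_divide_eq_right)
      then show ?thesis using Kpos by (simp add: field_simps)
    qed
    have "\<delta> * real m \<le> \<delta> * (real m)^2"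
  proof -
    have "real m \<le> real m ^ 2" by (cases m) (auto simp: power2_eq_square)
    then show ?thesis using \<delta>pos by (intro mult_left_mono) auto
  qed
    also have "\<dots> \<le> exp (\<delta> * (real m)^2)" by (smt (verit) exp_ge_add_one_self)
    also have "\<dots> \<le> c0 / K" by (rule low)
    finally have "\<delta> * real m \<le> c0 / K" .
    moreover have "c0 / K < \<delta> * real m" using m Kpos \<delta>pos by (simp add: field_simps)
    ultimately show False by simp
  qed
  show "gevrey_class L \<nu> \<sigma>1 \<noteq> gevrey_class L \<nu> \<sigma>2" using in2 notin1 by blast
qed


end
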